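(* Let $\mathcal{O}\subset\mathbb{R}^n$ be open, let $V:\mathcal{O}\to\mathbb{R}$ be locally Lipschitz, let $F:\mathcal{O}\rightrightarrows\mathbb{R}^n$ be inner semicontinuous and locally bounded in $\mathcal{O}$, let $\mathcal{A}\subset\mathbb{R}^n$ be closed and let $\gamma:\mathbb{R}_{\geq 0}\to\mathbb{R}$ be continuous. Suppose that $$\langle \nabla V(y), f\rangle \leq \gamma(|y|_\mathcal{A})\quad \text{for all } y\in\mathcal{O}\setminus\mathcal{N}_V \text{ and all } f\in F(y).$$ Then $$\langle v, f\rangle\leq \gamma(|x|_\mathcal{A})\quad\text{for all } x\in\mathcal{O},\ \text{all } v\in\partial V(x),\ \text{all } f\in F(x).$$
   Context: $|x|_\mathcal{A}=\min_{y\in\mathcal{A}}|x-y|$ is the Euclidean distance to $\mathcal{A}$. $\mathcal{N}_V:=\{x\in\mathcal{O}: \nabla V(x)\text{ does not exist}\}$. The Clarke generalized gradient is $\partial V(x):=\mathrm{co}\{v\in\mathbb{R}^n: \exists x_k\to x,\ x_k\notin\mathcal{N}_V,\ v=\lim_k\nabla V(x_k)\}$. A set-valued map $F:\mathcal{C}\rightrightarrows\mathbb{R}^n$ is inner semicontinuous relative to $\mathcal{C}$ at $x\in\mathcal{C}$ if for every $f\in F(x)$ and every sequence $x_k\in\mathcal{C}$ with $x_k\to x$ there exist $f_k\in F(x_k)$ with $f_k\to f$; it is inner semicontinuous in $\mathcal{C}$ if this holds at every $x\in\mathcal{C}$. $F$ is locally bounded in $\mathcal{C}$ if every $x\in\mathcal{C}$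 has a neighborhood $\mathcal{U}$ with $F(\mathcal{U}\cap\mathcal{C})$ bounded. *)

theory Defs
  imports "HOL-Analysis.Analysis"
begin

definition is_grad :: "('a::euclidean_space \<Rightarrow> real) \<Rightarrow> 'a \<Rightarrow> 'a \<Rightarrow> bool" where
  "is_grad V x v \<longleftrightarrow> (V has_derivative (\<lambda>h. v \<bullet> h)) (at x)"

definition nondiff_set :: "'a::euclidean_space set \<Rightarrow> ('a \<Rightarrow> real) \<Rightarrow> 'a set" where
  "nondiff_set Om V = {x \<in> Om. \<not> (\<exists>v. is_grad V x v)}"

definition clarke_grad :: "'a::euclidean_space set \<Rightarrow> ('a \<Rightarrow> real) \<Rightarrow> 'a \<Rightarrow> 'a set" where
  "clarke_grad Om V x = convex hull {v. \<exists>xs vs. (\<forall>k. xs k \<in> Om - nondiff_set Om V \<and> is_grad V (xs k) (vs k))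
        \<and> xs \<longlonglongrightarrow> x \<and> vs \<longlonglongrightarrow> v}"

definition locally_lipschitz_in :: "'a::euclidean_space set \<Rightarrow> ('a \<Rightarrow> real) \<Rightarrow> bool" where
  "locally_lipschitz_in Om V \<longleftrightarrow>
     (\<forall>x\<in>Om. \<exists>U. open U \<and> x \<in> U \<and> U \<subseteq> Om \<and> (\<exists>L. L-lipschitz_on U V))"

definition inner_semicontinuous_in :: "'a::euclidean_space set \<Rightarrow> ('a \<Rightarrow> 'a set) \<Rightarrow> bool" where
  "inner_semicontinuous_in C F \<longleftrightarrow>
     (\<forall>x\<in>C. \<forall>f\<in>F x. \<forall>xs. (\<forall>k. xs k \<in> C) \<and> xs \<longlonglongrightarrow> x \<longrightarrow>
        (\<exists>fs. (\<forall>k. fs k \<in> F (xs k)) \<and> fs \<longlonglongrightarrow> f))"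

definition locally_bounded_in :: "'a::euclidean_space set \<Rightarrow> ('a \<Rightarrow> 'a set) \<Rightarrow> bool" where
  "locally_bounded_in C F \<longleftrightarrow>
     (\<forall>x\<in>C. \<exists>U. open U \<and> x \<in> U \<and> bounded (\<Union>(F ` (U \<inter> C))))"

end

theory Submission
  imports Defs
begin

theorem proposition1:
  fixes Om :: "'a::euclidean_space set" and V :: "'a \<Rightarrow> real"
    and F :: "'a \<Rightarrow> 'a set" and A :: "'a set" and \<gamma> :: "real \<Rightarrow> real"
  assumes "open Om"
    and "locally_lipschitz_in Om V"
    and "inner_semicontinuous_in Om F"
    and "locally_bounded_in Om F"
    and "closed A"
    and "continuous_on {0..} \<gamma>"
    and "\<forall>y \<in> Om - nondiff_set Om V. \<forall>g f. is_grad V y g \<and> f \<in> F y \<longrightarrow> g \<bullet> f \<le> \<gamma> (infdist y A)"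
  shows "\<forall>x\<in>Om. \<forall>v\<in>clarke_grad Om V x. \<forall>f\<in>F x. v \<bullet> f \<le> \<gamma> (infdist x A)"
proof (intro ballI)
  fix x v f assume x: "x \<in> Om" and v: "v \<in> clarke_grad Om V x" and f: "f \<in> F x"
  let ?S = "{w. w \<bullet> f \<le> \<gamma> (infdist x A)}"
  have cS: "convex ?S"
    by (rule convex_halfspace_le[of f "\<gamma> (infdist x A)", simplified inner_commute])
  have gen: "{v. \<exists>xs vs. (\<forall>k. xs k \<in> Om - nondiff_set Om V \<and> is_grad V (xs k) (vs k))
        \<and> xs \<longlonglongrightarrow> x \<and> vs \<longlonglongrightarrow> v} \<subseteq> ?S"
  proof
    fix w assume "w \<in> {v. \<exists>xs vs. (\<forall>k. xs k \<in> Om - nondiff_set Om V \<and> is_grad V (xs k) (vs k))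
        \<and> xs \<longlonglongrightarrow> x \<and> vs \<longlonglongrightarrow> v}"
    then obtain xs vs where h: "\<forall>k. xs k \<in> Om - nondiff_set Om V \<and> is_grad V (xs k) (vs k)"
      and xl: "xs \<longlonglongrightarrow> x" and vl: "vs \<longlonglongrightarrow> w" by blast
    obtain fs where fs: "\<forall>k. fs k \<in> F (xs k)" and fl: "fs \<longlonglongrightarrow> f"
      using assms(3) x f h xl unfolding inner_semicontinuous_in_def by blast
    have le: "\<forall>k. vs k \<bullet> fs k \<le> \<gamma> (infdist (xs k) A)"
      using assms(7) h fs by blast
    have l1: "(\<lambda>k. vs k \<bullet> fs k) \<longlonglongrightarrow> w \<bullet> f" using vl fl by (rule tendsto_inner)
    have l2: "(\<lambda>k. infdist (xs k) A) \<longlonglongrightarrow> infdist x A" using xl by (rule tendsto_infdist)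
    have l3: "((\<lambda>k. \<gamma> (infdist (xs k) A)) \<longlonglongrightarrow> \<gamma> (infdist x A))"
      by (rule continuous_on_tendsto_compose[OF assms(6) l2]) (auto simp: infdist_nonneg)
    have "w \<bullet> f \<le> \<gamma> (infdist x A)"
      using l1 l3 le by (intro LIMSEQ_le[OF l1 l3]) (auto simp: o_def)
    then show "w \<in> ?S" by simp
  qed
  have "clarke_grad Om V x \<subseteq> ?S"
    unfolding clarke_grad_def using gen cS by (rule hull_minimal)
  then show "v \<bullet> f \<le> \<gamma> (infdist x A)" using v by blast
qed

end
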